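(* Let $A$ be a circular $m\times n$ matrix, $b\in\mathbb{Z}_+^m$ and $\beta$ a nonnegative integer. Then the polytope $Q_\beta(A,b):=\{x\in\mathbb{R}^n: Ax\ge b,\ x\ge0,\ \mathbf{1}^Tx=\beta\}$ is integral (all its vertices are integral).
   Context: Notation: $[n]=\{1,\dots,n\}$ with addition mod $n$; for $a,c\in[n]$ with $t\ge0$ minimal such that $a+t\equiv c\pmod n$, $[a,c)_n=\{a,a+1,\dots,a+t-1\}$ (mod $n$). An $m\times n$ $\{0,1\}$-matrix $A$ (columns indexed by $[n]$) is circular if for each row $i$ there are $\ell_i\in[n]$ and an integer $k_i$ with $2\le k_i\le n-1$ such that row $i$ is the incidence vector of $[\ell_i,\ell_i+k_i)_n$. $\mathbf{1}$ denotes the all-ones vector. *)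

theory Defs
  imports Complex_Main
begin

text \<open>Columns are indexed by 0..<n (instead of 1..n), rows by 0..<m; addition of
column indices is mod n. Vectors in R^n are functions nat => real vanishing outside 0..<n.\<close>

definition circular_matrix :: "nat \<Rightarrow> nat \<Rightarrow> (nat \<Rightarrow> nat \<Rightarrow> real) \<Rightarrow> bool" where
  "circular_matrix m n A \<longleftrightarrow>
     (\<forall>i<m. \<exists>l<n. \<exists>k::nat. 2 \<le> k \<and> k \<le> n - 1 \<and>
        (\<forall>j<n. A i j = (if \<exists>t<k. j = (l + t) mod n then 1 else 0)))"

definition Q_poly :: "nat \<Rightarrow> nat \<Rightarrow> (nat \<Rightarrow> nat \<Rightarrow> real) \<Rightarrow> (nat \<Rightarrow> int) \<Rightarrow> nat \<Rightarrow> (nat \<Rightarrow> real) set" where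
  "Q_poly m n A b \<beta> = {x. (\<forall>j. n \<le> j \<longrightarrow> x j = 0)
       \<and> (\<forall>i<m. (\<Sum>j<n. A i j * x j) \<ge> real_of_int (b i))
       \<and> (\<forall>j<n. x j \<ge> 0)
       \<and> (\<Sum>j<n. x j) = real \<beta>}"

definition is_vertex :: "(nat \<Rightarrow> real) set \<Rightarrow> (nat \<Rightarrow> real) \<Rightarrow> bool" where
  "is_vertex P x \<longleftrightarrow> x \<in> P \<and>
     \<not> (\<exists>y\<in>P. \<exists>z\<in>P. y \<noteq> z \<and> (\<exists>t::real. 0 < t \<and> t < 1 \<and> x = (\<lambda>j. t * y j + (1 - t) * z j)))"

definition integral_polytope :: "(nat \<Rightarrow> real) set \<Rightarrow> bool" where
  "integral_polytope P \<longleftrightarrow> (\<forall>x. is_vertex P x \<longrightarrow> (\<forall>j. x j \<in> \<int>))"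

end

theory Submission
  imports Defs
begin

lemma ivl_sum: "a \<le> c \<Longrightarrow> (\<Sum>j\<in>{a..<c}. v j) = (\<Sum>j<c. v j) - (\<Sum>j<a. (v::nat\<Rightarrow>real) j)"
  using sum_diff_nat_ivl[of 0 a c v] by (simp add: atLeast0LessThan)

lemma row_set:
  fixes l n k :: nat
  assumes "l < n" "k < n"
  shows "{j. j<n \<and> (\<exists>t<k. j = (l+t) mod n)} =
    (if l+k \<le> n then {l..<l+k} else {l..<n} \<union> {..<l+k-n})"
proof (cases "l+k \<le> n")
  case True
  have "{j. j<n \<and> (\<exists>t<k. j = (l+t) mod n)} = {l..<l+k}"
  proof (intro set_eqI iffI)
    fix j assume "j \<in> {j. j<n \<and> (\<exists>t<k. j = (l+t) mod n)}"
    then obtain t where "t<k" "j = (l+t) mod n" by auto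
    moreover have "l+t < n" using True \<open>t<k\<close> by arith
    ultimately show "j \<in> {l..<l+k}" by auto
  next
    fix j assume "j \<in> {l..<l+k}"
    then have "j < n" "j = (l + (j-l)) mod n" "j - l < k" using True by auto
    then show "j \<in> {j. j<n \<and> (\<exists>t<k. j = (l+t) mod n)}" by blast
  qed
  then show ?thesis using True by simp
next
  case False
  have "{j. j<n \<and> (\<exists>t<k. j = (l+t) mod n)} = {l..<n} \<union> {..<l+k-n}"
  proof (intro set_eqI iffI)
    fix j assume "j \<in> {j. j<n \<and> (\<exists>t<k. j = (l+t) mod n)}"
    then obtain t where t: "t<k" "j = (l+t) mod n" by auto
    show "j \<in> {l..<n} \<union> {..<l+k-n}"
    proof (cases "l+t < n")
      case True then show ?thesis using t by auto
    next
      case False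
      then have "(l+t) mod n = l+t-n" using t assms
      proof -
        have "n \<le> l+t" using False by simp
        then have "(l+t) mod n = (l+t-n) mod n" by (rule le_mod_geq)
        moreover have "l+t-n < n" using t assms by arith
        ultimately show ?thesis by simp
      qed
      then show ?thesis using t False by auto
    qed
  next
    fix j assume j: "j \<in> {l..<n} \<union> {..<l+k-n}"
    show "j \<in> {j. j<n \<and> (\<exists>t<k. j = (l+t) mod n)}"
    proof (cases "j \<in> {l..<n}")
      case True
      then have "j < n" "j = (l + (j-l)) mod n" "j - l < k" using False by auto
      then show ?thesis by blast
    next
      case c: False
      then have jj: "j < l+k-n" using j by auto
      then have "j < n" using assms by auto
      moreover have "j = (l + (j+n-l)) mod n" using jj assms \<open>j<n\<close> by simp
      moreover have "j+n-l < k" using jj assms by arith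
      ultimately show ?thesis by blast
    qed
  qed
  then show ?thesis using False by simp
qed

lemma row_repr:
  assumes "circular_matrix m n A" "i<m"
  shows "\<exists>p q r. p \<le> n \<and> q \<le> n \<and> r \<le> n \<and> (r = 0 \<or> p = n) \<and>
     (\<forall>v::nat\<Rightarrow>real. (\<Sum>j<n. A i j * v j) = (\<Sum>j<p. v j) - (\<Sum>j<q. v j) + (\<Sum>j<r. v j))"
proof -
  obtain l k where lk: "l<n" "2 \<le> k" "k \<le> n - 1"
    and Ai: "\<forall>j<n. A i j = (if \<exists>t<k. j = (l + t) mod n then 1 else 0)"
    using assms unfolding circular_matrix_def by blast
  have kn: "k < n" using lk by auto
  have rs: "(\<Sum>j<n. A i j * v j) = (\<Sum>j\<in>{j. j<n \<and> (\<exists>t<k. j = (l+t) mod n)}. v j)" for v :: "nat \<Rightarrow> real"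
  proof -
    have "(\<Sum>j<n. A i j * v j) = (\<Sum>j<n. if \<exists>t<k. j = (l + t) mod n then v j else 0)"
      by (rule sum.cong) (auto simp: Ai)
    also have "\<dots> = (\<Sum>j\<in>{j\<in>{..<n}. \<exists>t<k. j = (l+t) mod n}. v j)"
      by (simp only: sum.inter_filter[OF finite_lessThan])
    also have "{j\<in>{..<n}. \<exists>t<k. j = (l+t) mod n} = {j. j<n \<and> (\<exists>t<k. j = (l+t) mod n)}" by auto
    finally show ?thesis by simp
  qed
  show ?thesis
  proof (cases "l+k \<le> n")
    case True
    show ?thesis
      apply (rule exI[of _ "l+k"], rule exI[of _ l], rule exI[of _ 0])
      using True lk by (simp add: rs row_set[OF lk(1) kn] ivl_sum)
  next
    case False
    have disj: "{l..<n} \<inter> {..<l+k-n} = {}" using kn by auto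
    show ?thesis
      apply (rule exI[of _ n], rule exI[of _ l], rule exI[of _ "l+k-n"])
      using False lk kn by (simp add: rs row_set[OF lk(1) kn] sum.union_disjoint[OF _ _ disj] ivl_sum)
  qed
qed

theorem lemma3p1:
  fixes m n :: nat and A :: "nat \<Rightarrow> nat \<Rightarrow> real" and b :: "nat \<Rightarrow> int" and \<beta> :: nat
  assumes "circular_matrix m n A"
    and "\<forall>i<m. b i \<ge> 0"
  shows "integral_polytope (Q_poly m n A b \<beta>)"
  unfolding integral_polytope_def
proof (intro allI impI)
  fix x jj assume vx: "is_vertex (Q_poly m n A b \<beta>) x"
  let ?Q = "Q_poly m n A b \<beta>"
  have xQ: "x \<in> ?Q" using vx unfolding is_vertex_def by blast
  have x0: "\<forall>j. n \<le> j \<longrightarrow> x j = 0" and xrow: "\<forall>i<m. (\<Sum>j<n. A i j * x j) \<ge> real_of_int (b i)"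
    and xpos: "\<forall>j<n. x j \<ge> 0" and xsum: "(\<Sum>j<n. x j) = real \<beta>"
    using xQ unfolding Q_poly_def by auto
  define S where "S p = (\<Sum>j<p. x j)" for p
  show "x jj \<in> \<int>"
  proof (rule ccontr)
    assume nint: "x jj \<notin> \<int>"
    have "\<exists>p0\<le>n. S p0 \<notin> \<int>"
    proof (rule ccontr)
      assume "\<not> ?thesis"
      then have allS: "\<And>p. p \<le> n \<Longrightarrow> S p \<in> \<int>" by blast
      have "x jj \<in> \<int>"
      proof (cases "jj < n")
        case True
        have "x jj = S (Suc jj) - S jj" by (simp add: S_def)
        then show ?thesis using allS[of "Suc jj"] allS[of jj] True by simp
      next
        case False then show ?thesis using x0 by simp
      qed
      then show False using nint by simp
    qed
    then obtain p0 where p0: "p0 \<le> n" "S p0 \<notin> \<int>" by blast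
    define g where "g p = (if S p - S p0 \<in> \<int> then 1 else 0 :: real)" for p
    have g_eq: "g u = g v" if "S u - S v \<in> \<int>" for u v
    proof -
      have "S u - S p0 \<in> \<int> \<longleftrightarrow> S v - S p0 \<in> \<int>"
      proof
        assume "S u - S p0 \<in> \<int>"
        then have "(S u - S p0) - (S u - S v) \<in> \<int>" using that by (rule Ints_diff)
        then show "S v - S p0 \<in> \<int>" by simp
      next
        assume "S v - S p0 \<in> \<int>"
        then have "(S v - S p0) + (S u - S v) \<in> \<int>" using that by (rule Ints_add)
        then show "S u - S p0 \<in> \<int>" by simp
      qed
      then show ?thesis by (simp add: g_def)
    qed
    have g01: "g p = 0 \<or> g p = 1" for p by (simp add: g_def)
    have S0: "S 0 = 0" by (simp add: S_def)
    have Sn: "S n = real \<beta>" using xsum by (simp add: S_def)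
    have g0: "g 0 = 0"
    proof -
      have "S 0 - S p0 \<notin> \<int>" using p0(2) S0 by (simp add: minus_in_Ints_iff)
      then show ?thesis by (simp add: g_def)
    qed
    have gn: "g n = 0" using g_eq[of n 0] Sn S0 g0 by simp
    have gp0: "g p0 = 1" by (simp add: g_def)
    define d where "d j = (if j < n then g (Suc j) - g j else 0)" for j
    have dsum: "(\<Sum>j<p. d j) = g p" if "p \<le> n" for p
    proof -
      have "(\<Sum>j<p. d j) = (\<Sum>j<p. g (Suc j) - g j)"
        by (rule sum.cong) (use that in \<open>auto simp: d_def\<close>)
      also have "\<dots> = g p" by (simp add: sum_lessThan_telescope g0)
      finally show ?thesis .
    qed
    have dnz: "\<exists>j. d j \<noteq> 0"
    proof (rule ccontr)
      assume "\<not> ?thesis"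
      then have "(\<Sum>j<p0. d j) = 0" by simp
      then show False using dsum[OF p0(1)] gp0 by simp
    qed
    have dabs: "\<bar>d j\<bar> \<le> 1" for j
      using g01[of j] g01[of "Suc j"] by (auto simp: d_def)
    have dzero: "d j = 0" if "j < n" "x j = 0" for j
    proof -
      have "S (Suc j) - S j = x j" by (simp add: S_def)
      then have "g (Suc j) = g j" using g_eq[of "Suc j" j] that by simp
      then show ?thesis by (simp add: d_def)
    qed
    define row where "row i v = (\<Sum>j<n. A i j * v j)" for i and v :: "nat \<Rightarrow> real"
    define E where "E = insert 1 ({x j | j. j < n \<and> x j > 0} \<union> {row i x - b i | i. i < m \<and> row i x > b i})"
    have f1: "{x j | j. j < n \<and> x j > 0} \<subseteq> x ` {..<n}" by auto
    have f2: "{row i x - b i | i. i < m \<and> row i x > b i} \<subseteq> (\<lambda>i. row i x - b i) ` {..<m}" by auto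
    have finE: "finite E" unfolding E_def
      using finite_subset[OF f1] finite_subset[OF f2] by simp
    have Epos: "\<forall>e\<in>E. e > 0" unfolding E_def by auto
    define \<epsilon> where "\<epsilon> = Min E"
    have Ene: "E \<noteq> {}" unfolding E_def by simp
    have epos: "\<epsilon> > 0" unfolding \<epsilon>_def using Min_in[OF finE Ene] Epos by blast
    have ele: "\<epsilon> \<le> e" if "e \<in> E" for e unfolding \<epsilon>_def using finE that by simp
    have feas: "(\<lambda>j. x j + e * d j) \<in> ?Q" if e: "\<bar>e\<bar> \<le> \<epsilon>" for e
    proof -
      have c1: "\<forall>j. n \<le> j \<longrightarrow> x j + e * d j = 0" using x0 by (simp add: d_def)
      have c2: "\<forall>j<n. x j + e * d j \<ge> 0"
      proof (intro allI impI)
        fix j assume j: "j < n"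
        show "x j + e * d j \<ge> 0"
        proof (cases "x j = 0")
          case True then show ?thesis using dzero j by simp
        next
          case False
          then have "x j > 0" using xpos j by force
          then have "x j \<in> E" using j unfolding E_def by blast
          then have "\<epsilon> \<le> x j" by (rule ele)
          moreover have "\<bar>e * d j\<bar> \<le> \<epsilon>"
            using abs_mult[of e "d j"] mult_mono[OF e dabs[of j]] epos by simp
          ultimately show ?thesis by linarith
        qed
      qed
      have c3: "(\<Sum>j<n. x j + e * d j) = real \<beta>"
        using xsum dsum[of n] gn by (simp add: sum.distrib sum_distrib_left[symmetric])
      have c4: "\<forall>i<m. (\<Sum>j<n. A i j * (x j + e * d j)) \<ge> real_of_int (b i)"
      proof (intro allI impI)
        fix i assume i: "i < m"
        obtain p q r where pqr: "p \<le> n" "q \<le> n" "r \<le> n" "r = 0 \<or> p = n"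
          and rep: "\<forall>v::nat\<Rightarrow>real. (\<Sum>j<n. A i j * v j) = (\<Sum>j<p. v j) - (\<Sum>j<q. v j) + (\<Sum>j<r. v j)"
          using row_repr[OF assms(1) i] by blast
        have lin: "(\<Sum>j<n. A i j * (x j + e * d j)) = (S p - S q + S r) + e * (g p - g q + g r)"
          using rep[rule_format, of "\<lambda>j. x j + e * d j"] dsum[OF pqr(1)] dsum[OF pqr(2)] dsum[OF pqr(3)]
          by (simp add: S_def sum.distrib sum_distrib_left[symmetric] algebra_simps)
        have rx: "row i x = S p - S q + S r" using rep[rule_format, of x] by (simp add: row_def S_def)
        have gb: "\<bar>g p - g q + g r\<bar> \<le> 1"
          using pqr(4) g01[of p] g01[of q] g01[of r] g0 gn by auto
        show "(\<Sum>j<n. A i j * (x j + e * d j)) \<ge> real_of_int (b i)"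
        proof (cases "row i x > b i")
          case True
          then have "row i x - b i \<in> E" using i unfolding E_def by blast
          then have "\<epsilon> \<le> row i x - b i" by (rule ele)
          moreover have "\<bar>e * (g p - g q + g r)\<bar> \<le> \<epsilon>"
            using abs_mult[of e "g p - g q + g r"] mult_mono[OF e gb] epos by simp
          ultimately show ?thesis using lin rx by linarith
        next
          case False
          have "row i x \<ge> b i" using xrow i by (simp add: row_def)
          then have tight: "S p - S q + S r = b i" using False rx by linarith
          have "g p - g q + g r = 0"
            using pqr(4)
          proof
            assume "r = 0"
            then have "S p - S q \<in> \<int>" using tight S0 by (metis Ints_of_int add.right_neutral)
            then show ?thesis using g_eq[of p q] \<open>r = 0\<close> g0 by simp
          next
            assume "p = n"
            then have "S p = real \<beta>" using Sn by simp
            then have "S r - S q = b i - real \<beta>" using tight by linarith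
            then have "S r - S q \<in> \<int>" by simp
            then show ?thesis using g_eq[of r q] \<open>p = n\<close> gn by simp
          qed
          then show ?thesis using lin tight by simp
        qed
      qed
      show ?thesis unfolding Q_poly_def mem_Collect_eq using c1 c2 c3 c4 by (intro conjI)
    qed
    define y where "y = (\<lambda>j. x j + \<epsilon> * d j)"
    define z where "z = (\<lambda>j. x j + (- \<epsilon>) * d j)"
    have yQ: "y \<in> ?Q" unfolding y_def using feas[of \<epsilon>] epos by simp
    have zQ: "z \<in> ?Q" unfolding z_def using feas[of "- \<epsilon>"] epos by simp
    have "y \<noteq> z"
    proof
      assume "y = z"
      obtain j where "d j \<noteq> 0" using dnz by blast
      then have "y j \<noteq> z j" using epos by (simp add: y_def z_def)
      then show False using \<open>y = z\<close> by simp
    qed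
    moreover have "x = (\<lambda>j. (1/2) * y j + (1 - 1/2) * z j)"
      by (rule ext) (simp add: y_def z_def algebra_simps)
    ultimately have "\<exists>y\<in>?Q. \<exists>z\<in>?Q. y \<noteq> z \<and> (\<exists>t::real. 0 < t \<and> t < 1 \<and> x = (\<lambda>j. t * y j + (1 - t) * z j))"
      using yQ zQ by (intro bexI[of _ y] bexI[of _ z] conjI exI[of _ "1/2::real"]) auto
    then show False using vx unfolding is_vertex_def by blast
  qed
qed

end
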